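(* Let $\vec r_1,\vec r_2$ be in the closed unit ball of $\mathbb{R}^3$ and linearly dependent, with $r_i=|\vec r_i|$ and $m=\max\{r_1,r_2\}$. Then $$d^2_{\mathrm{symm},2}(\rho(\vec r_1),\rho(\vec r_2))=2\Big(|\vec r_1-\vec r_2|+\sqrt{1-r_1^2}+\sqrt{1-r_2^2}-2\sqrt{\big(1+\tfrac{\vec r_1\cdot\vec r_2}{m}\big)(1-m)}\Big),$$ with the convention that $\tfrac{\vec r_1\cdot\vec r_2}{m}=0$ when $m=0$.
   Context: Qubit setting: $\mathcal{H}=\mathbb{C}^2$, $\mathcal{H}^*$ is identified with $\mathbb{C}^2$ via the dual basis, and $A^T$ is the usual matrix transpose; operators on $\mathcal{H}\otimes\mathcal{H}^*$ are $4\times4$ matrices in the basis $e_1\otimes e_1^*,e_1\otimes e_2^*,e_2\otimes e_1^*,e_2\otimes e_2^*$. Pauli matrices: $\sigma_1=\sigma_x=\begin{pmatrix}0&1\\1&0\end{pmatrix}$, $\sigma_2=\sigma_y=\begin{pmatrix}0&-i\\i&0\end{pmatrix}$, $\sigma_3=\sigma_z=\begin{pmatrix}1&0\\0&-1\end{pmatrix}$, $\vec\sigma=(\sigma_1,\sigma_2,\sigma_3)$, and $\rho(\vec r)=\tfrac12(I+\vec r\cdot\vec\sigma)$ for $|\vec r|\le1$. The set of couplings of states $\rho,\omega$ is $\mathcal{C}(\rho,\omega)=\{\Pi\in\mathcal{S}(\mathcal{H}\otimes\mathcal{H}^* ):\mathrm{tr}_{\mathcal{H}^*}[\Pi]=\omega,\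 \mathrm{tr}_{\mathcal{H}}[\Pi]=\rho^T\}$. $C_{\mathrm{symm},2}=\sum_{k=1}^3(\sigma_k\otimes I^T-I\otimes\sigma_k^T)^2$, which equals the matrix $\begin{pmatrix}4&0&0&-4\\0&8&0&0\\0&0&8&0\\-4&0&0&4\end{pmatrix}$; $D^2_{\mathrm{symm},2}(\rho,\omega)=\min_{\Pi\in\mathcal{C}(\rho,\omega)}\mathrm{tr}[\Pi C_{\mathrm{symm},2}]$, and the quadratic Wasserstein divergence is $d_{\mathrm{symm},2}(\rho,\omega)=\big(D^2_{\mathrm{symm},2}(\rho,\omega)-\tfrac12(D^2_{\mathrm{symm},2}(\rho,\rho)+D^2_{\mathrm{symm},2}(\omega,\omega))\big)^{1/2}$. *)

theory Defs
  imports "HOL-Analysis.Analysis"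
begin

text \<open>Matrices are represented as functions nat => nat => complex, with entries
  outside the index range {0..<n} being irrelevant (we require them to be 0 for
  states).  For operators on H (x) H^*, the basis vector e_(a+1) (x) e_(b+1)^*
  (a, b in {0,1}) has index 2*a + b, matching the ordering of the paper.\<close>

type_synonym cmat = "nat \<Rightarrow> nat \<Rightarrow> complex"

definition mmult :: "nat \<Rightarrow> cmat \<Rightarrow> cmat \<Rightarrow> cmat" where
  "mmult n A B = (\<lambda>i j. \<Sum>k<n. A i k * B k j)"

definition mtrace :: "nat \<Rightarrow> cmat \<Rightarrow> complex" where
  "mtrace n A = (\<Sum>i<n. A i i)"

definition mtransp :: "cmat \<Rightarrow> cmat" where
  "mtransp A = (\<lambda>i j. A j i)"

definition id2 :: cmat where
  "id2 = (\<lambda>i j. if i < 2 \<and> j < 2 \<and> i = j then 1 else 0)"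

definition kron2 :: "cmat \<Rightarrow> cmat \<Rightarrow> cmat" where
  "kron2 A B = (\<lambda>i j. if i < 4 \<and> j < 4
      then A (i div 2) (j div 2) * B (i mod 2) (j mod 2) else 0)"

definition pauli :: "nat \<Rightarrow> cmat" where
  "pauli k = (\<lambda>i j.
     if i < 2 \<and> j < 2 then
       (if k = 1 then (if i \<noteq> j then 1 else 0)
        else if k = 2 then (if i = 0 \<and> j = 1 then - \<i> else if i = 1 \<and> j = 0 then \<i> else 0)
        else if k = 3 then (if i = j then (if i = 0 then 1 else -1) else 0)
        else 0)
     else 0)"

definition bloch :: "real^3 \<Rightarrow> cmat" where
  "bloch r = (\<lambda>i j. (id2 i j + complex_of_real (r$1) * pauli 1 i j
                         + complex_of_real (r$2) * pauli 2 i j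
                         + complex_of_real (r$3) * pauli 3 i j) / 2)"

definition is_state :: "nat \<Rightarrow> cmat \<Rightarrow> bool" where
  "is_state n A \<longleftrightarrow>
     (\<forall>i j. \<not> (i < n \<and> j < n) \<longrightarrow> A i j = 0) \<and>
     (\<forall>i<n. \<forall>j<n. A j i = cnj (A i j)) \<and>
     (\<forall>v :: nat \<Rightarrow> complex. 0 \<le> Re (\<Sum>i<n. \<Sum>j<n. cnj (v i) * A i j * v j)) \<and>
     mtrace n A = 1"

definition ptrace_Hstar :: "cmat \<Rightarrow> cmat" where
  "ptrace_Hstar P = (\<lambda>a a'. if a < 2 \<and> a' < 2 then (\<Sum>b<2. P (2*a+b) (2*a'+b)) else 0)"

definition ptrace_H :: "cmat \<Rightarrow> cmat" where
  "ptrace_H P = (\<lambda>b b'. if b < 2 \<and> b' < 2 then (\<Sum>a<2. P (2*a+b) (2*a+b')) else 0)"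

definition couplings :: "cmat \<Rightarrow> cmat \<Rightarrow> cmat set" where
  "couplings \<rho> \<omega> = {P. is_state 4 P \<and> ptrace_Hstar P = \<omega> \<and> ptrace_H P = mtransp \<rho>}"

definition C_symm2 :: cmat where
  "C_symm2 = (\<lambda>i j. \<Sum>k\<in>{1,2,3::nat}.
      mmult 4 (\<lambda>p q. kron2 (pauli k) (mtransp id2) p q - kron2 id2 (mtransp (pauli k)) p q)
              (\<lambda>p q. kron2 (pauli k) (mtransp id2) p q - kron2 id2 (mtransp (pauli k)) p q) i j)"

definition D2_symm2 :: "cmat \<Rightarrow> cmat \<Rightarrow> real" where
  "D2_symm2 \<rho> \<omega> = Inf ((\<lambda>P. Re (mtrace 4 (mmult 4 P C_symm2))) ` couplings \<rho> \<omega>)"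

definition d_symm2 :: "cmat \<Rightarrow> cmat \<Rightarrow> real" where
  "d_symm2 \<rho> \<omega> = sqrt (D2_symm2 \<rho> \<omega> - (D2_symm2 \<rho> \<rho> + D2_symm2 \<omega> \<omega>) / 2)"

end

theory Submission
  imports Defs
begin

lemma sum4: "(\<Sum>i<(4::nat). f i) = f 0 + f 1 + f 2 + (f 3::'a::comm_monoid_add)"
  by (simp add: eval_nat_numeral)
lemma sum2: "(\<Sum>i<(2::nat). f i) = f 0 + (f 1::'a::comm_monoid_add)"
  by (simp add: eval_nat_numeral)
lemma less4: "(i::nat) < 4 \<longleftrightarrow> i = 0 \<or> i = 1 \<or> i = 2 \<or> i = 3" by auto
lemma less2: "(i::nat) < 2 \<longleftrightarrow> i = 0 \<or> i = 1" by auto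

lemma bloch00: "bloch r 0 0 = Complex ((1 + r$3)/2) 0"
  by (simp add: bloch_def id2_def pauli_def complex_eq_iff)
lemma bloch01: "bloch r 0 1 = Complex (r$1/2) (- r$2/2)"
  by (simp add: bloch_def id2_def pauli_def complex_eq_iff)
lemma bloch10: "bloch r 1 0 = Complex (r$1/2) (r$2/2)"
  by (simp add: bloch_def id2_def pauli_def complex_eq_iff)
lemma bloch11: "bloch r 1 1 = Complex ((1 - r$3)/2) 0"
  by (simp add: bloch_def id2_def pauli_def complex_eq_iff)
lemma bloch01': "bloch r 0 (Suc 0) = Complex (r$1/2) (- r$2/2)"
  by (simp add: bloch_def id2_def pauli_def complex_eq_iff)
lemma bloch10': "bloch r (Suc 0) 0 = Complex (r$1/2) (r$2/2)"
  by (simp add: bloch_def id2_def pauli_def complex_eq_iff)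
lemma bloch11': "bloch r (Suc 0) (Suc 0) = Complex ((1 - r$3)/2) 0"
  by (simp add: bloch_def id2_def pauli_def complex_eq_iff)
lemmas bloch_simps = bloch00 bloch01 bloch10 bloch11 bloch01' bloch10' bloch11'

definition wv :: "real \<Rightarrow> real^3 \<Rightarrow> nat \<Rightarrow> complex" where
  "wv l n k = of_real l * bloch n (k div 2) (k mod 2) - bloch (-n) (k div 2) (k mod 2)"
definition psi :: "real^3 \<Rightarrow> nat \<Rightarrow> nat \<Rightarrow> nat \<Rightarrow> complex" where
  "psi n a b k = bloch (-n) (k div 2) a * bloch n b (k mod 2)"
definition Ml :: "real \<Rightarrow> real^3 \<Rightarrow> cmat" where
  "Ml l n k m = of_real (1+l) * (bloch (-n) (k div 2) (m div 2) * (if k mod 2 = m mod 2 then 1 else 0)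
      + of_real l * (if k div 2 = m div 2 then 1 else 0) * bloch n (m mod 2) (k mod 2))
      - of_real l * (if k \<in> {0,3} \<and> m \<in> {0,3} then 1 else 0)"

definition Cm :: cmat where "Cm = (\<lambda>i j. if i = j then (if i = 0 \<or> i = 3 then 4 else if i < 4 then 8 else 0)
   else if (i = 0 \<and> j = 3) \<or> (i = 3 \<and> j = 0) then -4 else 0)"
lemma C_eq: "i < 4 \<Longrightarrow> j < 4 \<Longrightarrow> C_symm2 i j = Cm i j"
  unfolding less4
  by (elim disjE; simp add: C_symm2_def mmult_def sum4 kron2_def pauli_def id2_def mtransp_def Cm_def)

lemma entry: assumes u: "(n$1)^2 + (n$2)^2 + (n$3)^2 = 1" and "k < 4" "m < 4"
  shows "cnj (wv l n k) * wv l n m + of_real ((1+l)^2) * (\<Sum>a<2. \<Sum>b<2. cnj (psi n a b k) * psi n a b m) = Ml l n m k"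
proof -
  have x2a: "n$1 * n$1 = 1 - n$2*n$2 - n$3*n$3" using u by (simp add: power2_eq_square)
  have x2b: "n$1 * (n$1 * w) = (1 - n$2*n$2 - n$3*n$3) * w" for w using x2a by (metis mult.assoc)
  show ?thesis
  using assms(2,3) unfolding less4
  apply (elim disjE; hypsubst_thin)
  apply (simp_all add: wv_def psi_def Ml_def sum2 bloch_simps complex_eq_iff)
  apply (simp_all add: field_simps power2_eq_square)
  apply (simp_all add: algebra_simps x2a x2b)
  done
qed

lemma norm3: "norm (n::real^3) = 1 \<Longrightarrow> (n$1)^2 + (n$2)^2 + (n$3)^2 = 1"
proof -
  assume "norm n = 1"
  hence "n \<bullet> n = 1" by (metis norm_eq_1)
  thus ?thesis by (simp add: inner_vec_def sum_3 power2_eq_square)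
qed

definition Qf :: "cmat \<Rightarrow> (nat \<Rightarrow> complex) \<Rightarrow> complex" where
  "Qf P v = (\<Sum>k<4. \<Sum>m<4. cnj (v k) * P k m * v m)"
definition omg :: "cmat \<Rightarrow> complex" where "omg P = P 0 0 + P 0 3 + P 3 0 + P 3 3"

lemma LB_ident:
  assumes u: "(n$1)^2 + (n$2)^2 + (n$3)^2 = 1"
  shows "Qf P (wv l n) + of_real ((1+l)^2) * (\<Sum>a<2. \<Sum>b<2. Qf P (psi n a b))
     = (\<Sum>k<4. \<Sum>m<4. P k m * Ml l n m k)"
proof -
  have "(\<Sum>k<4. \<Sum>m<4. P k m * Ml l n m k) = (\<Sum>k<4. \<Sum>m<4. P k m * (cnj (wv l n k) * wv l n m
      + of_real ((1+l)^2) * (\<Sum>a<2. \<Sum>b<2. cnj (psi n a b k) * psi n a b m)))"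
    by (intro sum.cong refl, subst entry[OF u, symmetric]) auto
  also have "\<dots> = Qf P (wv l n) + of_real ((1+l)^2) * (\<Sum>a<2. \<Sum>b<2. Qf P (psi n a b))"
    by (simp add: Qf_def sum4 sum2 algebra_simps)
  finally show ?thesis by simp
qed

lemma trace_ident:
  "(\<Sum>k<4. \<Sum>m<4. P k m * Ml l n m k) = of_real (1+l) * (\<Sum>a<2. \<Sum>a'<2. ptrace_Hstar P a a' * bloch (-n) a' a)
     + of_real (l*(1+l)) * (\<Sum>b<2. \<Sum>b'<2. ptrace_H P b b' * bloch n b b') - of_real l * omg P"
  apply (simp add: Ml_def omg_def sum4 sum2 ptrace_Hstar_def ptrace_H_def)
  apply (simp add: One_nat_def eval_nat_numeral algebra_simps)
  done

lemma tr_bloch: "(\<Sum>a<2. \<Sum>a'<2. bloch r a a' * bloch m a' a) = of_real ((1 + r \<bullet> m)/2)"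
  by (simp add: sum2 bloch_simps complex_eq_iff inner_vec_def sum_3 field_simps)

lemma tr_bloch2: "(\<Sum>b<2. \<Sum>b'<2. mtransp (bloch r) b b' * bloch m b b') = of_real ((1 + r \<bullet> m)/2)"
  by (simp add: mtransp_def sum2 bloch_simps complex_eq_iff inner_vec_def sum_3 field_simps)

lemma LB0:
  assumes u: "norm n = 1" and l: "l > 0" and P: "P \<in> couplings (bloch r1) (bloch r2)"
  shows "l * Re (omg P) \<le> (1+l) * ((1 - r2 \<bullet> n)/2) + l * (1+l) * ((1 + r1 \<bullet> n)/2)"
proof -
  have u': "(n$1)^2 + (n$2)^2 + (n$3)^2 = 1" using norm3 u by blast
  from P have st: "is_state 4 P" and h1: "ptrace_Hstar P = bloch r2" and h2: "ptrace_H P = mtransp (bloch r1)"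
    by (auto simp: couplings_def)
  have psd: "0 \<le> Re (Qf P v)" for v using st unfolding is_state_def Qf_def by blast
  have "0 \<le> Re (Qf P (wv l n) + of_real ((1+l)^2) * (\<Sum>a<2. \<Sum>b<2. Qf P (psi n a b)))"
    using psd by (simp add: sum2 add_nonneg_nonneg)
  also have "\<dots> = Re (\<Sum>k<4. \<Sum>m<4. P k m * Ml l n m k)" by (simp only: LB_ident[OF u'])
  also have "\<dots> = (1+l) * ((1 - r2 \<bullet> n)/2) + l * (1+l) * ((1 + r1 \<bullet> n)/2) - l * Re (omg P)"
    unfolding trace_ident h1 h2 tr_bloch tr_bloch2 by (simp add: inner_minus_right)
  finally show ?thesis by simp
qed

lemma cost:
  assumes "mtrace 4 P = 1" shows "Re (mtrace 4 (mmult 4 P C_symm2)) = 8 - 4 * Re (omg P)"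
proof -
  have "mtrace 4 (mmult 4 P C_symm2) = (\<Sum>i<4. \<Sum>k<4. P i k * Cm k i)"
    unfolding mtrace_def mmult_def by (intro sum.cong refl) (simp add: C_eq)
  also have "\<dots> = 8 - 4 * omg P"
    using assms by (simp add: sum4 Cm_def omg_def mtrace_def algebra_simps) (metis (no_types, lifting) add.assoc distrib_left mult.commute mult.right_neutral)
  finally show ?thesis by simp
qed

definition xv :: "real \<Rightarrow> real \<Rightarrow> real^3 \<Rightarrow> nat \<Rightarrow> complex" where
  "xv s t n k = of_real s * bloch n (k div 2) (k mod 2) + of_real t * bloch (-n) (k div 2) (k mod 2)"
definition phi :: "real^3 \<Rightarrow> nat \<Rightarrow> nat \<Rightarrow> nat \<Rightarrow> complex" where
  "phi n a b k = bloch n (k div 2) a * bloch (-n) b (k mod 2)"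
definition Pc :: "real \<Rightarrow> real \<Rightarrow> real^3 \<Rightarrow> cmat" where
  "Pc s t n k m = (if k < 4 \<and> m < 4 then xv s t n k * cnj (xv s t n m)
      + of_real (1 - s^2 - t^2) * (\<Sum>a<2. \<Sum>b<2. phi n a b k * cnj (phi n a b m)) else 0)"

lemma qf_rank1: fixes v f :: "nat \<Rightarrow> complex" shows "(\<Sum>k<4. \<Sum>m<4. cnj (v k) * (f k * cnj (f m)) * v m)
   = of_real ((cmod (\<Sum>k<4. cnj (v k) * f k))^2)"
proof -
  have "of_real ((cmod (\<Sum>k<4. cnj (v k) * f k))^2) = (\<Sum>k<4. cnj (v k) * f k) * (\<Sum>m<4. v m * cnj (f m))"
    unfolding complex_norm_square by simp
  also have "\<dots> = (\<Sum>k<4. \<Sum>m<4. cnj (v k) * (f k * cnj (f m)) * v m)"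
    by (simp add: sum_product mult_ac)
  finally show ?thesis by simp
qed

lemma Pc_herm: "Pc s t n j i = cnj (Pc s t n i j)"
  by (simp add: Pc_def sum2 ac_simps)

lemma Pc_psd: assumes c: "s^2 + t^2 \<le> 1"
  shows "0 \<le> Re (\<Sum>k<4. \<Sum>m<4. cnj (v k) * Pc s t n k m * v m)"
proof -
  have "(\<Sum>k<4. \<Sum>m<4. cnj (v k) * Pc s t n k m * v m) =
     (\<Sum>k<4. \<Sum>m<4. cnj (v k) * (xv s t n k * cnj (xv s t n m)) * v m)
     + of_real (1 - s^2 - t^2) * (\<Sum>a<2. \<Sum>b<2. (\<Sum>k<4. \<Sum>m<4. cnj (v k) * (phi n a b k * cnj (phi n a b m)) * v m))"
    by (simp add: Pc_def sum4 sum2 algebra_simps)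
  also have "\<dots> = of_real ((cmod (\<Sum>k<4. cnj (v k) * xv s t n k))^2 + (1 - s^2 - t^2) *
     (\<Sum>a<2. \<Sum>b<2. (cmod (\<Sum>k<4. cnj (v k) * phi n a b k))^2))"
    by (simp only: qf_rank1) (simp add: sum2)
  finally show ?thesis using c by (simp add: sum2)
qed

lemma Pc_trace:
  assumes u: "(n$1)^2 + (n$2)^2 + (n$3)^2 = 1"
  shows "mtrace 4 (Pc s t n) = 1"
proof -
  have x2a: "n$1 * n$1 = 1 - n$2*n$2 - n$3*n$3" using u by (simp add: power2_eq_square)
  have x2b: "n$1 * (n$1 * w) = (1 - n$2*n$2 - n$3*n$3) * w" for w using x2a by (metis mult.assoc)
  show ?thesis
  apply (simp add: mtrace_def Pc_def sum4 sum2 xv_def phi_def bloch_simps complex_eq_iff)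
  apply (simp add: field_simps power2_eq_square)
  apply (simp add: algebra_simps x2a x2b)
  done
qed

lemma Pc_omg:
  assumes u: "(n$1)^2 + (n$2)^2 + (n$3)^2 = 1"
  shows "omg (Pc s t n) = of_real ((s + t)^2)"
proof -
  have x2a: "n$1 * n$1 = 1 - n$2*n$2 - n$3*n$3" using u by (simp add: power2_eq_square)
  have x2b: "n$1 * (n$1 * w) = (1 - n$2*n$2 - n$3*n$3) * w" for w using x2a by (metis mult.assoc)
  show ?thesis
  apply (simp add: omg_def Pc_def sum4 sum2 xv_def phi_def bloch_simps complex_eq_iff)
  apply (simp add: field_simps power2_eq_square)
  apply (simp add: algebra_simps x2a x2b)
  done
qed

lemma Pc_ptr1:
  assumes u: "(n$1)^2 + (n$2)^2 + (n$3)^2 = 1"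
  shows "ptrace_Hstar (Pc s t n) = bloch ((1 - 2 * t\<^sup>2) *\<^sub>R n)"
proof -
  have x2a: "n$1 * n$1 = 1 - n$2*n$2 - n$3*n$3" using u by (simp add: power2_eq_square)
  have x2b: "n$1 * (n$1 * w) = (1 - n$2*n$2 - n$3*n$3) * w" for w using x2a by (metis mult.assoc)
  have "ptrace_Hstar (Pc s t n) a a' = bloch ((1 - 2 * t\<^sup>2) *\<^sub>R n) a a'" for a a'
  proof (cases "a < 2 \<and> a' < 2")
    case True
    then show ?thesis unfolding less2
      apply (elim conjE disjE; hypsubst_thin)
      apply (simp_all add: ptrace_Hstar_def Pc_def sum4 sum2 xv_def phi_def bloch_simps complex_eq_iff)
      apply (simp_all add: field_simps power2_eq_square)
      apply (simp_all add: algebra_simps x2a x2b)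
      done
  next
    case False
    then show ?thesis by (auto simp: ptrace_Hstar_def bloch_def id2_def pauli_def)
  qed
  thus ?thesis by blast
qed

lemma Pc_ptr2:
  assumes u: "(n$1)^2 + (n$2)^2 + (n$3)^2 = 1"
  shows "ptrace_H (Pc s t n) = mtransp (bloch ((2 * s\<^sup>2 - 1) *\<^sub>R n))"
proof -
  have x2a: "n$1 * n$1 = 1 - n$2*n$2 - n$3*n$3" using u by (simp add: power2_eq_square)
  have x2b: "n$1 * (n$1 * w) = (1 - n$2*n$2 - n$3*n$3) * w" for w using x2a by (metis mult.assoc)
  have "ptrace_H (Pc s t n) a a' = mtransp (bloch ((2 * s\<^sup>2 - 1) *\<^sub>R n)) a a'" for a a'
  proof (cases "a < 2 \<and> a' < 2")
    case True
    then show ?thesis unfolding less2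
      apply (elim conjE disjE; hypsubst_thin)
      apply (simp_all add: ptrace_H_def mtransp_def Pc_def sum4 sum2 xv_def phi_def bloch_simps complex_eq_iff)
      apply (simp_all add: field_simps power2_eq_square)
      apply (simp_all add: algebra_simps x2a x2b)
      done
  next
    case False
    then show ?thesis by (auto simp: ptrace_H_def mtransp_def bloch_def id2_def pauli_def)
  qed
  thus ?thesis by blast
qed

lemma opt:
  fixes G s t :: real
  assumes s: "s \<ge> 0" and t: "t \<ge> 0" and h: "\<And>l. l > 0 \<Longrightarrow> G \<le> (1 + 1/l) * t^2 + (1+l) * s^2"
  shows "G \<le> (s+t)^2"
proof (cases "s > 0 \<and> t > 0")
  case True
  have "G \<le> (1 + 1/(t/s)) * t^2 + (1 + t/s) * s^2" using h[of "t/s"] True by simp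
  also have "\<dots> = (s+t)^2" using True by (simp add: field_simps power2_eq_square)
  finally show ?thesis .
next
  case False
  then consider "s = 0" | "t = 0" using s t by linarith
  then show ?thesis
  proof cases
    case 1
    show ?thesis
    proof (rule ccontr)
      assume "\<not> G \<le> (s+t)^2"
      hence g: "G > t^2" using 1 by simp
      show False
      proof (cases "t = 0")
        case True
        then show False using h[of 1] g 1 by simp
      next
        case False
        hence tp: "t^2 > 0" by simp
        define l where "l = 2 * t^2 / (G - t^2)"
        have lp: "l > 0" using tp g unfolding l_def by simp
        have "G \<le> (1 + 1/l) * t^2" using h[OF lp] 1 by simp
        also have "\<dots> = t^2 + (G - t^2)/2" using tp g unfolding l_def by (simp add: field_simps)
        finally show False using g by (simp add: field_simps)
      qed
    qed
  next
    case 2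
    show ?thesis
    proof (rule ccontr)
      assume "\<not> G \<le> (s+t)^2"
      hence g: "G > s^2" using 2 by simp
      show False
      proof (cases "s = 0")
        case True
        then show False using h[of 1] g 2 by simp
      next
        case False
        hence tp: "s^2 > 0" by simp
        define l where "l = (G - s^2) / (2 * s^2)"
        have lp: "l > 0" using tp g unfolding l_def by simp
        have "G \<le> (1 + l) * s^2" using h[OF lp] 2 by simp
        also have "\<dots> = s^2 + (G - s^2)/2" using tp g unfolding l_def by (simp add: field_simps)
        finally show False using g by (simp add: field_simps)
      qed
    qed
  qed
qed

lemma Pc_coupling:
  assumes u: "norm n = 1" and c: "s^2 + t^2 \<le> 1"
  shows "Pc s t n \<in> couplings (bloch ((2 * s\<^sup>2 - 1) *\<^sub>R n)) (bloch ((1 - 2 * t\<^sup>2) *\<^sub>R n))"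
proof -
  have u': "(n$1)^2 + (n$2)^2 + (n$3)^2 = 1" using norm3 u by blast
  have z: "\<forall>i j. \<not> (i < 4 \<and> j < 4) \<longrightarrow> Pc s t n i j = 0" by (simp add: Pc_def)
  have h: "\<forall>i<4. \<forall>j<4. Pc s t n j i = cnj (Pc s t n i j)" using Pc_herm by blast
  have p: "\<forall>v. 0 \<le> Re (\<Sum>i<4. \<Sum>j<4. cnj (v i) * Pc s t n i j * v j)" using Pc_psd[OF c] by blast
  have "is_state 4 (Pc s t n)"
    unfolding is_state_def using z h p Pc_trace[OF u'] by blast
  thus ?thesis unfolding couplings_def using Pc_ptr1[OF u'] Pc_ptr2[OF u'] by simp
qed

lemma core:
  assumes u: "norm n = 1" and s: "s \<ge> 0" and t: "t \<ge> 0" and c: "s^2 + t^2 \<le> 1"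
  shows "D2_symm2 (bloch ((2 * s\<^sup>2 - 1) *\<^sub>R n)) (bloch ((1 - 2 * t\<^sup>2) *\<^sub>R n)) = 8 - 4 * (s+t)^2"
proof -
  have u': "(n$1)^2 + (n$2)^2 + (n$3)^2 = 1" using norm3 u by blast
  have nn: "n \<bullet> n = 1" using u by (metis norm_eq_1)
  let ?f = "\<lambda>P. Re (mtrace 4 (mmult 4 P C_symm2))"
  have mem: "8 - 4 * (s+t)^2 \<in> ?f ` couplings (bloch ((2 * s\<^sup>2 - 1) *\<^sub>R n)) (bloch ((1 - 2 * t\<^sup>2) *\<^sub>R n))"
  proof (rule image_eqI)
    show "Pc s t n \<in> couplings (bloch ((2 * s\<^sup>2 - 1) *\<^sub>R n)) (bloch ((1 - 2 * t\<^sup>2) *\<^sub>R n))"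
      by (rule Pc_coupling[OF u c])
    show "8 - 4 * (s+t)^2 = ?f (Pc s t n)"
      using cost[OF Pc_trace[OF u']] Pc_omg[OF u'] by simp
  qed
  have low: "8 - 4 * (s+t)^2 \<le> y" if yin: "y \<in> ?f ` couplings (bloch ((2 * s\<^sup>2 - 1) *\<^sub>R n)) (bloch ((1 - 2 * t\<^sup>2) *\<^sub>R n))" for y
  proof -
    obtain P where y: "y = ?f P" and P: "P \<in> couplings (bloch ((2 * s\<^sup>2 - 1) *\<^sub>R n)) (bloch ((1 - 2 * t\<^sup>2) *\<^sub>R n))"
      using yin by (rule imageE)
    have tr: "mtrace 4 P = 1" using P by (simp add: couplings_def is_state_def)
    have "Re (omg P) \<le> (1 + 1/l) * t^2 + (1+l) * s^2" if l: "l > 0" for l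
    proof -
      have "l * Re (omg P) \<le> (1+l) * ((1 - ((1 - 2 * t\<^sup>2) *\<^sub>R n) \<bullet> n)/2) + l * (1+l) * ((1 + ((2 * s\<^sup>2 - 1) *\<^sub>R n) \<bullet> n)/2)"
        by (rule LB0[OF u l P])
      also have "\<dots> = l * ((1 + 1/l) * t^2 + (1+l) * s^2)"
        unfolding inner_scaleR_left nn using l by (simp add: field_simps)
      finally show ?thesis using l by simp
    qed
    hence "Re (omg P) \<le> (s+t)^2" using opt[OF s t] by blast
    thus ?thesis using y cost[OF tr] by simp
  qed
  show ?thesis unfolding D2_symm2_def by (rule cInf_eq_minimum[OF mem low])
qed

lemma Xnn:
  fixes a b :: real
  assumes "-1 \<le> a" "a \<le> b" "b \<le> 1"
  shows "0 \<le> 2*(b-a) - 4 * sqrt ((1+a)*(1-b)) + 2 * sqrt ((1+a)*(1-a)) + 2 * sqrt ((1+b)*(1-b))"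
proof -
  define A where "A = sqrt (1+a)"
  define A' where "A' = sqrt (1-a)"
  define B where "B = sqrt (1+b)"
  define B' where "B' = sqrt (1-b)"
  have A2: "A^2 = 1+a" unfolding A_def using assms by simp
  have B2: "B^2 = 1+b" unfolding B_def using assms by simp
  have AB: "A \<le> B" unfolding A_def B_def using assms by simp
  have AB': "B' \<le> A'" unfolding A'_def B'_def using assms by simp
  have nn: "0 \<le> A" "0 \<le> A'" "0 \<le> B" "0 \<le> B'" unfolding A_def A'_def B_def B'_def using assms by simp_all
  have e1: "sqrt ((1+a)*(1-b)) = A * B'" unfolding A_def B'_def by (simp add: real_sqrt_mult)
  have e2: "sqrt ((1+a)*(1-a)) = A * A'" unfolding A_def A'_def by (simp add: real_sqrt_mult)
  have e3: "sqrt ((1+b)*(1-b)) = B * B'" unfolding B_def B'_def by (simp add: real_sqrt_mult)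
  have t1: "0 \<le> (B-A)*(B+A)" using AB nn by simp
  have t2: "0 \<le> A*(A'-B')" using AB' nn by simp
  have t3: "0 \<le> B'*(B-A)" using AB nn by simp
  have "2*(b-a) - 4 * sqrt ((1+a)*(1-b)) + 2 * sqrt ((1+a)*(1-a)) + 2 * sqrt ((1+b)*(1-b))
      = 2 * ((B-A)*(B+A) + A*(A'-B') + B'*(B-A))"
    unfolding e1 e2 e3 using A2 B2 by (simp add: algebra_simps power2_eq_square)
  thus ?thesis using t1 t2 t3 by simp
qed

lemma mq1:
  fixes a b :: real
  assumes "\<bar>b\<bar> \<le> \<bar>a\<bar>" "a \<noteq> 0"
  shows "(1 + a*b / max \<bar>a\<bar> \<bar>b\<bar>) * (1 - max \<bar>a\<bar> \<bar>b\<bar>) = (1 + min a b) * (1 - max a b)"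
proof (cases "a > 0")
  case True
  have m: "max \<bar>a\<bar> \<bar>b\<bar> = a" using assms True by auto
  have "b \<le> a" using assms True by auto
  thus ?thesis unfolding m using True by (simp add: min_def max_def)
next
  case False
  hence an: "a < 0" using assms by simp
  have m: "max \<bar>a\<bar> \<bar>b\<bar> = -a" using assms an by auto
  have "a \<le> b" using assms an by auto
  thus ?thesis unfolding m using an by (simp add: min_def max_def field_simps)
qed

lemma mq:
  fixes a b :: real
  shows "(1 + (if max \<bar>a\<bar> \<bar>b\<bar> = 0 then 0 else a*b / max \<bar>a\<bar> \<bar>b\<bar>)) * (1 - max \<bar>a\<bar> \<bar>b\<bar>) = (1 + min a b) * (1 - max a b)"
proof (cases "max \<bar>a\<bar> \<bar>b\<bar> = 0")
  case True
  hence "a = 0" "b = 0" by (auto simp: max_def split: if_splits)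
  thus ?thesis by simp
next
  case False
  show ?thesis
  proof (cases "\<bar>b\<bar> \<le> \<bar>a\<bar>")
    case True
    hence "a \<noteq> 0" using False by auto
    thus ?thesis using mq1[OF True] False by simp
  next
    case c: False
    hence "b \<noteq> 0" by auto
    have "(1 + b*a / max \<bar>b\<bar> \<bar>a\<bar>) * (1 - max \<bar>b\<bar> \<bar>a\<bar>) = (1 + min b a) * (1 - max b a)"
      using mq1[of a b] c \<open>b \<noteq> 0\<close> by simp
    thus ?thesis using False by (simp add: max.commute min.commute mult.commute)
  qed
qed

lemma dep:
  fixes r1 r2 :: "real^3"
  assumes "\<exists>a b :: real. (a \<noteq> 0 \<or> b \<noteq> 0) \<and> a *\<^sub>R r1 + b *\<^sub>R r2 = 0"
  shows "\<exists>n a b. norm n = 1 \<and> r1 = a *\<^sub>R n \<and> r2 = b *\<^sub>R n"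
proof -
  obtain \<alpha> \<beta> :: real where ab: "\<alpha> \<noteq> 0 \<or> \<beta> \<noteq> 0" and e: "\<alpha> *\<^sub>R r1 + \<beta> *\<^sub>R r2 = 0" using assms by blast
  show ?thesis
  proof (cases "r1 = 0")
    case True
    show ?thesis
    proof (cases "r2 = 0")
      case True
      then show ?thesis using \<open>r1 = 0\<close> by (intro exI[of _ "axis 1 1"] exI[of _ 0]) simp
    next
      case False
      then show ?thesis using \<open>r1 = 0\<close>
        by (intro exI[of _ "(1 / norm r2) *\<^sub>R r2"] exI[of _ 0] exI[of _ "norm r2"]) simp
    qed
  next
    case False
    have "\<beta> \<noteq> 0"
    proof
      assume "\<beta> = 0"
      hence "\<alpha> \<noteq> 0" "\<alpha> *\<^sub>R r1 = 0" using ab e by auto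
      thus False using False by simp
    qed
    hence r2: "r2 = (- \<alpha> / \<beta>) *\<^sub>R r1"
    proof -
      have "\<beta> *\<^sub>R r2 = - (\<alpha> *\<^sub>R r1)" using e by (metis add.commute eq_neg_iff_add_eq_0)
      hence "(1/\<beta>) *\<^sub>R (\<beta> *\<^sub>R r2) = (1/\<beta>) *\<^sub>R (- (\<alpha> *\<^sub>R r1))" by simp
      thus ?thesis using \<open>\<beta> \<noteq> 0\<close> by (simp add: scaleR_scaleR)
    qed
    show ?thesis using False r2
      by (intro exI[of _ "(1 / norm r1) *\<^sub>R r1"] exI[of _ "norm r1"] exI[of _ "(- \<alpha> / \<beta>) * norm r1"]) simp
  qed
qed

lemma D2le:
  assumes u: "norm n = 1" and ab: "-1 \<le> a" "a \<le> b" "b \<le> 1"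
  shows "D2_symm2 (bloch (a *\<^sub>R n)) (bloch (b *\<^sub>R n)) = 4 + 2*(b-a) - 4 * sqrt ((1+a)*(1-b))"
proof -
  define s where "s = sqrt ((1+a)/2)"
  define t where "t = sqrt ((1-b)/2)"
  have s2: "s^2 = (1+a)/2" unfolding s_def using ab by simp
  have t2: "t^2 = (1-b)/2" unfolding t_def using ab by simp
  have s0: "s \<ge> 0" "t \<ge> 0" unfolding s_def t_def using ab by simp_all
  have c: "s^2 + t^2 \<le> 1" using s2 t2 ab by simp
  have ea: "2 * s\<^sup>2 - 1 = a" using s2 by simp
  have eb: "1 - 2 * t\<^sup>2 = b" using t2 by simp
  have st: "s * t = sqrt ((1+a)*(1-b)) / 2"
  proof -
    have "s * t = sqrt ((1+a)/2 * ((1-b)/2))" unfolding s_def t_def by (metis real_sqrt_mult)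
    also have "(1+a)/2 * ((1-b)/2) = ((1+a)*(1-b)) / 4" by simp
    also have "sqrt (((1+a)*(1-b)) / 4) = sqrt ((1+a)*(1-b)) / 2" by (simp add: real_sqrt_divide)
    finally show ?thesis .
  qed
  have "D2_symm2 (bloch (a *\<^sub>R n)) (bloch (b *\<^sub>R n)) = 8 - 4 * (s+t)^2"
    using core[OF u s0 c] unfolding ea eb .
  also have "\<dots> = 8 - 4 * (s^2 + t^2 + 2 * (s*t))" by (simp add: power2_sum)
  also have "\<dots> = 4 + 2*(b-a) - 4 * sqrt ((1+a)*(1-b))" unfolding s2 t2 st by (simp add: field_simps)
  finally show ?thesis .
qed

lemma D2gen:
  assumes u: "norm n = 1" and ab: "\<bar>a\<bar> \<le> 1" "\<bar>b\<bar> \<le> 1"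
  shows "D2_symm2 (bloch (a *\<^sub>R n)) (bloch (b *\<^sub>R n)) = 4 + 2*\<bar>a-b\<bar> - 4 * sqrt ((1 + min a b)*(1 - max a b))"
proof (cases "a \<le> b")
  case True
  then show ?thesis using D2le[OF u, of a b] ab by (simp add: min_def max_def)
next
  case False
  have u': "norm (-n) = 1" using u by simp
  have "D2_symm2 (bloch ((-a) *\<^sub>R (-n))) (bloch ((-b) *\<^sub>R (-n))) = 4 + 2*((-b)-(-a)) - 4 * sqrt ((1+(-a))*(1-(-b)))"
    using D2le[OF u', of "-a" "-b"] ab False by simp
  then show ?thesis using False by (simp add: min_def max_def mult.commute)
qed

theorem corollary3p3:
  fixes r1 r2 :: "real^3"
  assumes "norm r1 \<le> 1" and "norm r2 \<le> 1"
    and "\<exists>a b :: real. (a \<noteq> 0 \<or> b \<noteq> 0) \<and> a *\<^sub>R r1 + b *\<^sub>R r2 = 0"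
  shows "(let m = max (norm r1) (norm r2);
              q = (if m = 0 then 0 else (r1 \<bullet> r2) / m)
          in (d_symm2 (bloch r1) (bloch r2))\<^sup>2 =
             2 * (norm (r1 - r2) + sqrt (1 - (norm r1)\<^sup>2) + sqrt (1 - (norm r2)\<^sup>2)
                  - 2 * sqrt ((1 + q) * (1 - m))))"
proof -
  obtain n a b where n: "norm n = 1" and r1: "r1 = a *\<^sub>R n" and r2: "r2 = b *\<^sub>R n"
    using dep[OF assms(3)] by blast
  have na: "norm r1 = \<bar>a\<bar>" using r1 n by simp
  have nb: "norm r2 = \<bar>b\<bar>" using r2 n by simp
  have a1: "\<bar>a\<bar> \<le> 1" using assms(1) na by simp
  have b1: "\<bar>b\<bar> \<le> 1" using assms(2) nb by simp
  have nn: "n \<bullet> n = 1" using n by (metis norm_eq_1)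
  have ip: "r1 \<bullet> r2 = a * b" unfolding r1 r2 using nn by (simp add: inner_scaleR_left inner_scaleR_right)
  have nd: "norm (r1 - r2) = \<bar>a - b\<bar>"
  proof -
    have "r1 - r2 = (a - b) *\<^sub>R n" unfolding r1 r2 by (simp add: scaleR_diff_left)
    thus ?thesis using n by simp
  qed
  define X where "X = 2*\<bar>a-b\<bar> - 4 * sqrt ((1 + min a b)*(1 - max a b)) + 2 * sqrt ((1+a)*(1-a)) + 2 * sqrt ((1+b)*(1-b))"
  have Dab: "D2_symm2 (bloch r1) (bloch r2) = 4 + 2*\<bar>a-b\<bar> - 4 * sqrt ((1 + min a b)*(1 - max a b))"
    unfolding r1 r2 by (rule D2gen[OF n a1 b1])
  have Daa: "D2_symm2 (bloch r1) (bloch r1) = 4 - 4 * sqrt ((1+a)*(1-a))"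
    unfolding r1 using D2gen[OF n a1 a1] by simp
  have Dbb: "D2_symm2 (bloch r2) (bloch r2) = 4 - 4 * sqrt ((1+b)*(1-b))"
    unfolding r2 using D2gen[OF n b1 b1] by simp
  have dX: "D2_symm2 (bloch r1) (bloch r2) - (D2_symm2 (bloch r1) (bloch r1) + D2_symm2 (bloch r2) (bloch r2)) / 2 = X"
    unfolding Dab Daa Dbb X_def by (simp add: field_simps)
  have X0: "X \<ge> 0"
  proof (cases "a \<le> b")
    case True
    then show ?thesis using Xnn[of a b] a1 b1 unfolding X_def by (simp add: min_def max_def)
  next
    case False
    have h: "0 \<le> 2*(a-b) - 4 * sqrt ((1+b)*(1-a)) + 2 * sqrt ((1+b)*(1-b)) + 2 * sqrt ((1+a)*(1-a))"
      using Xnn[of b a] False a1 b1 by (simp add: abs_le_iff)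
    have "X = 2*(a-b) - 4 * sqrt ((1+b)*(1-a)) + 2 * sqrt ((1+b)*(1-b)) + 2 * sqrt ((1+a)*(1-a))"
      unfolding X_def using False by (simp add: min_def max_def mult.commute)
    then show ?thesis using h by linarith
  qed
  have dsq: "(d_symm2 (bloch r1) (bloch r2))\<^sup>2 = X"
    unfolding d_symm2_def dX using X0 by simp
  have e1: "(1+a)*(1-a) = 1 - a^2" by (simp add: algebra_simps power2_eq_square)
  have e2: "(1+b)*(1-b) = 1 - b^2" by (simp add: algebra_simps power2_eq_square)
  show ?thesis
    unfolding Let_def dsq na nb ip nd mq power2_abs X_def e1 e2 by (simp add: algebra_simps)
qed

end
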